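(* Let $S$ be a Polish space, $R\subseteq S\times S$ a Borel relation, and $\mu,\nu$ Borel probability measures on $S$. Set $c=1-\mathbf 1_R$. Then the supremum \[ \sup\Big\{\int_S\phi\,d\mu-\int_S\phi\,d\nu:\ \phi\in b\mathcal B(S),\ \phi(x)-\phi(y)\le c(x,y)\ \forall x,y\in S\Big\} \] is attained by some $\phi\in b\mathcal B(S)$ satisfying $\phi(x)-\phi(y)\le c(x,y)$ for all $x,y\in S$.
   Context: $b\mathcal{B}(S)$ denotes the set of all bounded Borel measurable functions $S\to\mathbb{R}$; $\mathbf 1_R$ is the indicator function of $R$. *)

theory Defs
  imports "HOL-Probability.Probability"
begin

definition cost :: "('a \<times> 'a) set \<Rightarrow> 'a \<Rightarrow> 'a \<Rightarrow> real" where
  "cost R x y = 1 - indicator R (x, y)"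

definition feasible :: "('a::topological_space \<times> 'a) set \<Rightarrow> ('a \<Rightarrow> real) \<Rightarrow> bool" where
  "feasible R \<phi> \<longleftrightarrow> \<phi> \<in> borel_measurable borel \<and> bounded (range \<phi>) \<and>
     (\<forall>x y. \<phi> x - \<phi> y \<le> cost R x y)"

end

theory Submission
  imports Defs
begin

definition NN :: "('a::topological_space \<times> 'a) set \<Rightarrow> ('a \<Rightarrow> real) set" where
  "NN R = {\<phi>. \<phi> \<in> borel_measurable borel \<and> (\<forall>x. 0 \<le> \<phi> x \<and> \<phi> x \<le> 1) \<and>
      (\<forall>x y. (x, y) \<in> R \<longrightarrow> \<phi> x \<le> \<phi> y)}"

fun gmin :: "(nat \<Rightarrow> 'a \<Rightarrow> real) \<Rightarrow> nat \<Rightarrow> nat \<Rightarrow> 'a \<Rightarrow> real" where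
  "gmin f n 0 = f n"
| "gmin f n (Suc m) = (\<lambda>x. min (f n x) (gmin f (Suc n) m x))"

lemma int_ok:
  fixes \<phi> :: "'a::topological_space \<Rightarrow> real"
  assumes "prob_space M" "sets M = sets borel" "\<phi> \<in> borel_measurable borel" "\<And>x. \<bar>\<phi> x\<bar> \<le> B"
  shows "integrable M \<phi>"
proof -
  have m: "\<phi> \<in> borel_measurable M" using assms(2,3) measurable_cong_sets by blast
  interpret prob_space M by fact
  show ?thesis
    by (rule finite_measure.integrable_const_bound[where B=B]) (auto simp: m assms(4) finite_measure_axioms)
qed

lemma lim_int:
  fixes u :: "nat \<Rightarrow> 'a::topological_space \<Rightarrow> real"
  assumes "prob_space M" "sets M = sets borel" "\<And>i. u i \<in> borel_measurable borel"
    "\<And>i x. \<bar>u i x\<bar> \<le> 1" "U \<in> borel_measurable borel" "\<And>x. (\<lambda>i. u i x) \<longlonglongrightarrow> U x"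
  shows "(\<lambda>i. integral\<^sup>L M (u i)) \<longlonglongrightarrow> integral\<^sup>L M U"
proof -
  interpret prob_space M by fact
  have ms: "borel_measurable M = borel_measurable borel" using assms(2) measurable_cong_sets by blast
  show ?thesis
    by (rule integral_dominated_convergence[where w="\<lambda>_. 1"]) (use assms ms in auto)
qed

lemma NN_feasible:
  assumes "\<phi> \<in> NN R" shows "feasible R \<phi>"
proof -
  have a: "\<phi> \<in> borel_measurable borel" "\<And>x. 0 \<le> \<phi> x \<and> \<phi> x \<le> 1"
    "\<And>x y. (x, y) \<in> R \<Longrightarrow> \<phi> x \<le> \<phi> y" using assms unfolding NN_def by auto
  have "bounded (range \<phi>)" unfolding bounded_iff using a(2) by (auto intro!: exI[of _ 1])
  moreover have "\<phi> x - \<phi> y \<le> cost R x y" for x y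
    using a(2)[of x] a(2)[of y] a(3)[of x y] unfolding cost_def by (cases "(x, y) \<in> R") auto
  ultimately show ?thesis unfolding feasible_def using a(1) by auto
qed

lemma NN_min: "a \<in> NN R \<Longrightarrow> b \<in> NN R \<Longrightarrow> (\<lambda>x. min (a x) (b x)) \<in> NN R"
  unfolding NN_def apply (auto simp: min_def)
  by (meson order_trans nle_le)+

lemma NN_max: "a \<in> NN R \<Longrightarrow> b \<in> NN R \<Longrightarrow> (\<lambda>x. max (a x) (b x)) \<in> NN R"
  unfolding NN_def apply (auto simp: max_def)
  by (meson order_trans nle_le)+

lemma NN_abs: "a \<in> NN R \<Longrightarrow> \<bar>a x\<bar> \<le> 1"
  unfolding NN_def by auto

lemma NN_meas: "a \<in> NN R \<Longrightarrow> a \<in> borel_measurable borel"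
  unfolding NN_def by auto

theorem mainTheorem6:
  fixes R :: "('a::polish_space \<times> 'a) set" and \<mu> \<nu> :: "'a measure"
  assumes "R \<in> sets (borel :: ('a \<times> 'a) measure)"
    and "prob_space \<mu>" and "sets \<mu> = sets borel"
    and "prob_space \<nu>" and "sets \<nu> = sets borel"
  shows "\<exists>\<phi>. feasible R \<phi> \<and>
    (\<integral>x. \<phi> x \<partial>\<mu>) - (\<integral>x. \<phi> x \<partial>\<nu>)
      = (SUP \<psi>\<in>{\<psi>. feasible R \<psi>}. (\<integral>x. \<psi> x \<partial>\<mu>) - (\<integral>x. \<psi> x \<partial>\<nu>))"
proof -
  define F where "F \<psi> = (\<integral>x. \<psi> x \<partial>\<mu>) - (\<integral>x. \<psi> x \<partial>\<nu>)" for \<psi> :: "'a \<Rightarrow> real"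
  interpret mu: prob_space \<mu> by fact
  interpret nu: prob_space \<nu> by fact
  have intN: "integrable \<mu> a" "integrable \<nu> a" if "a \<in> NN R" for a
    using int_ok[OF assms(2,3) NN_meas[OF that] NN_abs[OF that]]
      int_ok[OF assms(4,5) NN_meas[OF that] NN_abs[OF that]] by auto
  have limF: "(\<lambda>i. F (u i)) \<longlonglongrightarrow> F U" if "\<And>i. u i \<in> NN R" "U \<in> NN R"
    "\<And>x. (\<lambda>i. u i x) \<longlonglongrightarrow> U x" for u U
    unfolding F_def
    by (intro tendsto_diff lim_int assms NN_meas[OF that(1)] NN_meas[OF that(2)] NN_abs[OF that(1)] that(3))
  have fdata: "\<psi> \<in> borel_measurable borel" "bounded (range \<psi>)" "\<And>x y. \<psi> x \<le> \<psi> y + 1"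
    "\<And>x y. (x, y) \<in> R \<Longrightarrow> \<psi> x \<le> \<psi> y"
    "integrable \<mu> \<psi>" "integrable \<nu> \<psi>"
    if "feasible R \<psi>" for \<psi>
  proof -
    have a: "\<psi> \<in> borel_measurable borel" "bounded (range \<psi>)" "\<And>x y. \<psi> x - \<psi> y \<le> cost R x y"
      using that unfolding feasible_def by auto
    show "\<psi> \<in> borel_measurable borel" "bounded (range \<psi>)" by (fact a(1)) (fact a(2))
    show "\<psi> x \<le> \<psi> y + 1" for x y using a(3)[of x y] unfolding cost_def
      by (cases "(x, y) \<in> R") auto
    show "\<psi> x \<le> \<psi> y" if "(x, y) \<in> R" for x y using a(3)[of x y] that unfolding cost_def
      by (cases "(x, y) \<in> R") auto
    obtain B where B: "\<And>x. \<bar>\<psi> x\<bar> \<le> B" using a(2) unfolding bounded_iff by auto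
    show "integrable \<mu> \<psi>" "integrable \<nu> \<psi>"
      using int_ok[OF assms(2,3) a(1) B] int_ok[OF assms(4,5) a(1) B] by auto
  qed
  have bound: "F \<psi> \<le> 1" if "feasible R \<psi>" for \<psi>
  proof -
    note d = fdata[OF that]
    have "(\<integral>x. \<psi> x \<partial>\<mu>) \<le> \<psi> y + 1" for y
      by (rule prob_space.integral_le_const[OF assms(2) d(5)]) (use d(3) in auto)
    then have "(\<integral>x. \<psi> x \<partial>\<mu>) - 1 \<le> (\<integral>x. \<psi> x \<partial>\<nu>)"
      by (intro prob_space.integral_ge_const[OF assms(4) d(6)]) (auto simp: algebra_simps)
    then show ?thesis unfolding F_def by simp
  qed
  have normal: "\<exists>\<phi>\<in>NN R. F \<phi> = F \<psi>" if "feasible R \<psi>" for \<psi>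
  proof -
    note d = fdata[OF that]
    define m where "m = Inf (range \<psi>)"
    have bb: "bdd_below (range \<psi>)" using d(2) by (rule bounded_imp_bdd_below)
    have lo: "m \<le> \<psi> x" for x unfolding m_def by (rule cINF_lower[OF bb]) simp
    have hi: "\<psi> x - 1 \<le> m" for x unfolding m_def
      by (rule cINF_greatest) (use d(3)[of x] in \<open>auto simp: algebra_simps\<close>)
    have inN: "(\<lambda>x. \<psi> x - m) \<in> NN R"
      unfolding NN_def using d(1) lo hi d(4) by (auto simp: algebra_simps)
    have "F (\<lambda>x. \<psi> x - m) = F \<psi>"
      unfolding F_def using d(5,6) by (simp add: mu.prob_space nu.prob_space)
    then show ?thesis using inN by blast
  qed
  have modular: "F (\<lambda>x. min (a x) (b x)) + F (\<lambda>x. max (a x) (b x)) = F a + F b"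
    if "a \<in> NN R" "b \<in> NN R" for a b
  proof -
    have e: "(\<lambda>x. min (a x) (b x) + max (a x) (b x)) = (\<lambda>x. a x + b x)" by (auto simp: min_def max_def)
    have i: "integrable M (\<lambda>x. min (a x) (b x))" "integrable M (\<lambda>x. max (a x) (b x))"
       "integrable M a" "integrable M b"
      if "M = \<mu> \<or> M = \<nu>" for M
      using that intN NN_min NN_max \<open>a \<in> NN R\<close> \<open>b \<in> NN R\<close> by blast+
    have "(\<integral>x. min (a x) (b x) \<partial>M) + (\<integral>x. max (a x) (b x) \<partial>M) = (\<integral>x. a x \<partial>M) + (\<integral>x. b x \<partial>M)"
      if "M = \<mu> \<or> M = \<nu>" for M
      using Bochner_Integration.integral_add[OF i(1,2)[OF that], symmetric] Bochner_Integration.integral_add[OF i(3,4)[OF that], symmetric] e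
      by simp
    from this[of \<mu>] this[of \<nu>] show ?thesis unfolding F_def by simp
  qed
  have zN: "(\<lambda>_. 0) \<in> NN R" unfolding NN_def by auto
  define t where "t = (SUP \<phi>\<in>NN R. F \<phi>)"
  have bddN: "bdd_above (F ` NN R)"
    using bound NN_feasible by (auto intro!: bdd_aboveI[where M=1])
  have Ft: "F \<phi> \<le> t" if "\<phi> \<in> NN R" for \<phi>
    unfolding t_def using bddN that by (rule cSUP_upper2) simp
  have main: "\<exists>\<phi>\<in>NN R. t \<le> F \<phi>"
  proof -
    have "\<forall>n::nat. \<exists>\<phi>\<in>NN R. t - (1/2)^n < F \<phi>"
    proof
      fix n :: nat
      have "t - (1/2)^n < t" by simp
      then show "\<exists>\<phi>\<in>NN R. t - (1/2)^n < F \<phi>"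
        unfolding t_def using less_cSUP_iff[OF _ bddN] zN by blast
    qed
    then obtain f where f: "\<And>n. f n \<in> NN R" "\<And>n. t - (1/2)^n < F (f n)" by metis
    have modb: "F a + F b - t \<le> F (\<lambda>x. min (a x) (b x))" if "a \<in> NN R" "b \<in> NN R" for a b
      using modular[OF that] Ft[OF NN_max[OF that]] by linarith
    have gN: "gmin f n m \<in> NN R" for n m
      by (induction m arbitrary: n) (auto simp: f NN_min)
    have gF: "t - 2 * (1/2)^n + (1/2)^(n+m) \<le> F (gmin f n m)" for n m
    proof (induction m arbitrary: n)
      case 0 then show ?case using f(2)[of n] by simp
    next
      case (Suc m)
      have "F (f n) + F (gmin f (Suc n) m) - t \<le> F (gmin f n (Suc m))"
        using modb[OF f(1) gN] by simp
      moreover have "t - 2 * (1/2)^(Suc n) + (1/2)^(Suc n+m) \<le> F (gmin f (Suc n) m)" by (rule Suc.IH)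
      moreover note f(2)[of n]
      ultimately show ?case by simp
    qed
    have gdec: "gmin f n (Suc m) x \<le> gmin f n m x" for n m x
    proof (induction m arbitrary: n)
      case 0 then show ?case by simp
    next
      case (Suc m)
      have "gmin f (Suc n) (Suc m) x \<le> gmin f (Suc n) m x" by (rule Suc.IH)
      then show ?case by (metis gmin.simps(2) min.mono order_refl)
    qed
    have gstep: "gmin f n (Suc m) x \<le> gmin f (Suc n) m x" for n m x by simp
    have g01: "0 \<le> gmin f n m x \<and> gmin f n m x \<le> 1" for n m x
      using gN[of n m] unfolding NN_def by auto
    define h where "h n x = (INF m. gmin f n m x)" for n x
    have bbg: "bdd_below (range (\<lambda>m. gmin f n m x))" for n x
      using g01 by (auto intro!: bdd_belowI[where m=0])
    have hN: "h n \<in> NN R" for n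
    proof -
      have "h n \<in> borel_measurable borel" unfolding h_def
        using gN by (intro borel_measurable_cINF_real) (auto simp: NN_def)
      moreover have "0 \<le> h n x \<and> h n x \<le> 1" for x
        unfolding h_def using g01 cINF_lower2[OF bbg, of 0 n x 1] g01[of n 0 x]
        by (auto intro!: cINF_greatest)
      moreover have "h n x \<le> h n y" if "(x, y) \<in> R" for x y
        unfolding h_def
      proof (rule cINF_greatest)
        fix m
        have "gmin f n m x \<le> gmin f n m y" using gN[of n m] that unfolding NN_def by auto
        then show "(INF m. gmin f n m x) \<le> gmin f n m y"
          using cINF_lower[OF bbg, of m] by (meson order_trans UNIV_I)
      qed simp
      ultimately show ?thesis unfolding NN_def by auto
    qed
    have hlim: "(\<lambda>m. gmin f n m x) \<longlonglongrightarrow> h n x" for n x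
      unfolding h_def
      by (rule LIMSEQ_decseq_INF[OF bbg]) (unfold antimono_iff_le_Suc, use gdec in blast)
    have hF: "t - 2 * (1/2)^n \<le> F (h n)" for n
    proof (rule LIMSEQ_le_const[OF limF[OF gN hN hlim]])
      show "\<exists>N. \<forall>m\<ge>N. t - 2 * (1/2)^n \<le> F (gmin f n m)"
      proof (intro exI allI impI)
        fix m
        show "t - 2 * (1/2)^n \<le> F (gmin f n m)"
          using gF[of n m] zero_le_power[of "1/2::real" "n+m"] by linarith
      qed
    qed
    have hinc: "h n x \<le> h (Suc n) x" for n x
      unfolding h_def
    proof (rule cINF_greatest)
      fix m
      show "(INF m. gmin f n m x) \<le> gmin f (Suc n) m x"
        using cINF_lower[OF bbg, of "Suc m"] gstep[of n m x] by (meson order_trans UNIV_I)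
    qed simp
    have h01: "0 \<le> h n x \<and> h n x \<le> 1" for n x
      using hN[of n] unfolding NN_def by auto
    define H where "H x = (SUP n. h n x)" for x
    have bbh: "bdd_above (range (\<lambda>n. h n x))" for x
      using h01 by (auto intro!: bdd_aboveI[where M=1])
    have HN: "H \<in> NN R"
    proof -
      have "H \<in> borel_measurable borel" unfolding H_def
        using hN by (intro borel_measurable_cSUP) (auto simp: NN_def bbh)
      moreover have "0 \<le> H x \<and> H x \<le> 1" for x
      proof -
        have "h 0 x \<le> (SUP n. h n x)" by (rule cSUP_upper[OF UNIV_I bbh])
        moreover have "(SUP n. h n x) \<le> 1" using h01 by (auto intro!: cSUP_least)
        ultimately show ?thesis unfolding H_def using h01[of 0 x] by linarith
      qed
      moreover have "H x \<le> H y" if "(x, y) \<in> R" for x y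
        unfolding H_def
      proof (rule cSUP_least)
        fix n
        have "h n x \<le> h n y" using hN[of n] that unfolding NN_def by auto
        then show "h n x \<le> (SUP n. h n y)"
          using cSUP_upper[OF _ bbh, of n] by (meson order_trans UNIV_I)
      qed simp
      ultimately show ?thesis unfolding NN_def by auto
    qed
    have Hlim: "(\<lambda>n. h n x) \<longlonglongrightarrow> H x" for x
      unfolding H_def
      by (rule LIMSEQ_incseq_SUP[OF bbh]) (simp add: incseq_SucI hinc)
    have l1: "(\<lambda>n. F (h n)) \<longlonglongrightarrow> F H" by (rule limF[OF hN HN Hlim])
    have l2: "(\<lambda>n. t - 2 * (1/2)^n) \<longlonglongrightarrow> t"
      by (intro tendsto_eq_intros LIMSEQ_power_zero) auto
    have "t \<le> F H" using LIMSEQ_le[OF l2 l1] hF by blast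
    then show ?thesis using HN by blast
  qed
  then obtain \<phi> where \<phi>: "\<phi> \<in> NN R" "t \<le> F \<phi>" by blast
  have fe: "feasible R \<phi>" using \<phi> NN_feasible by blast
  have bddF: "bdd_above (F ` {\<psi>. feasible R \<psi>})"
    using bound by (auto intro!: bdd_aboveI[where M=1])
  have "F \<phi> = (SUP \<psi>\<in>{\<psi>. feasible R \<psi>}. F \<psi>)"
  proof (rule antisym)
    show "F \<phi> \<le> (SUP \<psi>\<in>{\<psi>. feasible R \<psi>}. F \<psi>)"
      using bddF fe by (intro cSUP_upper) auto
    show "(SUP \<psi>\<in>{\<psi>. feasible R \<psi>}. F \<psi>) \<le> F \<phi>"
    proof (rule cSUP_least)
      show "{\<psi>. feasible R \<psi>} \<noteq> {}" using fe by auto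
      fix \<psi> assume "\<psi> \<in> {\<psi>. feasible R \<psi>}"
      then obtain \<phi>' where "\<phi>' \<in> NN R" "F \<phi>' = F \<psi>" using normal by auto
      then show "F \<psi> \<le> F \<phi>" using Ft \<phi> by fastforce
    qed
  qed
  then show ?thesis using fe unfolding F_def by blast
qed

end
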